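(* Let $L$ be a Lie algebra over a field $K$ of characteristic different from $2$ and $3$. If $L$ possesses a nonzero commutative $2$-cocycle, then $L$ has a nonzero homomorphic image satisfying the standard identity of degree $5$: $$\sum_{\sigma\in S_4}\operatorname{sgn}(\sigma)\,[[[[y,x_{\sigma(1)}],x_{\sigma(2)}],x_{\sigma(3)}],x_{\sigma(4)}]=0\quad\text{for all } x_1,\dots,x_4,y.$$
   Context: A commutative $2$-cocycle on $L$ is a symmetric bilinear form $\varphi:L\times L\to K$ such that $\varphi([x,y],z)+\varphi([z,x],y)+\varphi([y,z],x)=0$ for all $x,y,z\in L$. *)

theory Defs
  imports Complex_Main "HOL-Combinatorics.Permutations"
begin

text \<open>A Lie algebra over a field 'k: the whole type 'a, with scalar multiplication
  scale and bracket br.\<close>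

definition lie_algebra :: "('k::field \<Rightarrow> 'a::ab_group_add \<Rightarrow> 'a) \<Rightarrow> ('a \<Rightarrow> 'a \<Rightarrow> 'a) \<Rightarrow> bool" where
  "lie_algebra scale br \<longleftrightarrow>
     vector_space scale \<and>
     (\<forall>x y z. br (x + y) z = br x z + br y z) \<and>
     (\<forall>x y z. br x (y + z) = br x y + br x z) \<and>
     (\<forall>c x y. br (scale c x) y = scale c (br x y)) \<and>
     (\<forall>c x y. br x (scale c y) = scale c (br x y)) \<and>
     (\<forall>x. br x x = 0) \<and>
     (\<forall>x y z. br x (br y z) + br y (br z x) + br z (br x y) = 0)"

definition bilinear_form :: "('k::field \<Rightarrow> 'a::ab_group_add \<Rightarrow> 'a) \<Rightarrow> ('a \<Rightarrow> 'a \<Rightarrow> 'k) \<Rightarrow> bool" where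
  "bilinear_form scale \<phi> \<longleftrightarrow>
     (\<forall>x y z. \<phi> (x + y) z = \<phi> x z + \<phi> y z) \<and>
     (\<forall>x y z. \<phi> x (y + z) = \<phi> x y + \<phi> x z) \<and>
     (\<forall>c x y. \<phi> (scale c x) y = c * \<phi> x y) \<and>
     (\<forall>c x y. \<phi> x (scale c y) = c * \<phi> x y)"

definition comm_2_cocycle :: "('k::field \<Rightarrow> 'a::ab_group_add \<Rightarrow> 'a) \<Rightarrow> ('a \<Rightarrow> 'a \<Rightarrow> 'a) \<Rightarrow> ('a \<Rightarrow> 'a \<Rightarrow> 'k) \<Rightarrow> bool" where
  "comm_2_cocycle scale br \<phi> \<longleftrightarrow>
     bilinear_form scale \<phi> \<and>
     (\<forall>x y. \<phi> x y = \<phi> y x) \<and>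
     (\<forall>x y z. \<phi> (br x y) z + \<phi> (br z x) y + \<phi> (br y z) x = 0)"

definition lie_ideal :: "('k::field \<Rightarrow> 'a::ab_group_add \<Rightarrow> 'a) \<Rightarrow> ('a \<Rightarrow> 'a \<Rightarrow> 'a) \<Rightarrow> 'a set \<Rightarrow> bool" where
  "lie_ideal scale br I \<longleftrightarrow>
     0 \<in> I \<and> (\<forall>x\<in>I. \<forall>y\<in>I. x + y \<in> I) \<and> (\<forall>c. \<forall>x\<in>I. scale c x \<in> I) \<and>
     (\<forall>x. \<forall>y\<in>I. br x y \<in> I)"

definition std5 :: "('k::field \<Rightarrow> 'a::ab_group_add \<Rightarrow> 'a) \<Rightarrow> ('a \<Rightarrow> 'a \<Rightarrow> 'a) \<Rightarrow> 'a \<Rightarrow> (nat \<Rightarrow> 'a) \<Rightarrow> 'a" where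
  "std5 scale br y x =
     (\<Sum>\<sigma> \<in> {\<sigma>. \<sigma> permutes {1..4::nat}}.
        scale (of_int (sign \<sigma>)) (br (br (br (br y (x (\<sigma> 1))) (x (\<sigma> 2))) (x (\<sigma> 3))) (x (\<sigma> 4))))"

text \<open>The quotient L/I satisfies the standard identity of degree 5 iff every value
  of the standard polynomial on L lies in I.\<close>
definition quotient_satisfies_std5 :: "('k::field \<Rightarrow> 'a::ab_group_add \<Rightarrow> 'a) \<Rightarrow> ('a \<Rightarrow> 'a \<Rightarrow> 'a) \<Rightarrow> 'a set \<Rightarrow> bool" where
  "quotient_satisfies_std5 scale br I \<longleftrightarrow> (\<forall>y x. std5 scale br y x \<in> I)"

end

theory Submission
  imports Defs
begin

definition E5 :: "('a::ab_group_add \<Rightarrow> 'a \<Rightarrow> 'a) \<Rightarrow> 'a \<Rightarrow> 'a \<Rightarrow> 'a \<Rightarrow> 'a \<Rightarrow> 'a \<Rightarrow> 'a" where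
  "E5 br y a b c d = (br (br (br (br y a) (b)) (c)) (d)) - (br (br (br (br y a) (b)) (d)) (c)) - (br (br (br (br y a) (c)) (b)) (d)) + (br (br (br (br y a) (c)) (d)) (b)) + (br (br (br (br y a) (d)) (b)) (c)) - (br (br (br (br y a) (d)) (c)) (b)) - (br (br (br (br y b) (a)) (c)) (d)) + (br (br (br (br y b) (a)) (d)) (c)) + (br (br (br (br y b) (c)) (a)) (d)) - (br (br (br (br y b) (c)) (d)) (a)) - (br (br (br (br y b) (d)) (a)) (c)) + (br (br (br (br y b) (d)) (c)) (a)) + (br (br (br (br y c) (a)) (b)) (d)) - (br (br (br (br y c) (a)) (d)) (b)) - (br (br (br (br y c) (b)) (a)) (d)) + (br (br (br (br y c) (b)) (d)) (a)) + (br (br (br (br y c) (d)) (a)) (b)) - (br (br (br (br y c) (d)) (b)) (a)) - (br (br (br (br y d) (a)) (b)) (c)) + (br (br (br (br y d) (a)) (c)) (b)) + (br (br (br (br y d) (b)) (a)) (c)) - (br (br (br (br y d) (b)) (c)) (a)) - (br (br (br (br y d) (c)) (a)) (b)) + (br (br (br (br y d) (c)) (b)) (a))"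

fun adl :: "('a \<Rightarrow> 'a \<Rightarrow> 'a) \<Rightarrow> 'a list \<Rightarrow> 'a \<Rightarrow> 'a" where
  "adl br [] w = w" | "adl br (a # as) w = adl br as (br a w)"

lemma sign_tc: "permutation q \<Longrightarrow> sign (transpose a b \<circ> q) = (if a = b then sign q else - sign q)"
  by (simp add: sign_compose permutation_swap_id sign_swap_id)

context
  fixes scale :: "'k::field \<Rightarrow> 'a::ab_group_add \<Rightarrow> 'a"
    and br :: "'a \<Rightarrow> 'a \<Rightarrow> 'a"
    and \<phi> :: "'a \<Rightarrow> 'a \<Rightarrow> 'k"
  assumes L: "lie_algebra scale br"
    and C: "comm_2_cocycle scale br \<phi>"
begin

lemma br_add1: "br (x + y) z = br x z + br y z" using L unfolding lie_algebra_def by auto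
lemma br_add2: "br x (y + z) = br x y + br x z" using L unfolding lie_algebra_def by auto
lemma br_aa: "br x x = 0" using L unfolding lie_algebra_def by auto
lemma br_jac: "br x (br y z) + br y (br z x) + br z (br x y) = 0" using L unfolding lie_algebra_def by auto
lemma br_01: "br 0 z = 0" using br_add1[of 0 0 z] by simp
lemma br_02: "br z 0 = 0" using br_add2[of z 0 0] by simp
lemma br_neg1: "br (- x) z = - br x z"
  using br_add1[of x "- x" z] br_01 by (simp add: eq_neg_iff_add_eq_0 add.commute)
lemma br_neg2: "br z (- x) = - br z x"
  using br_add2[of z x "- x"] br_02 by (simp add: eq_neg_iff_add_eq_0 add.commute)
lemma br_sub1: "br (x - y) z = br x z - br y z" by (simp only: diff_conv_add_uminus br_add1 br_neg1)
lemma br_sub2: "br z (x - y) = br z x - br z y" by (simp only: diff_conv_add_uminus br_add2 br_neg2)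
lemma br_anti: "br x y = - br y x"
proof -
  have "0 = br (x + y) (x + y)" by (simp add: br_aa)
  also have "... = br x y + br y x" by (simp only: br_add1 br_add2 br_aa[of x] br_aa[of y] add_0 add_0_right) (simp add: add.commute)
  finally have "br x y + br y x = 0" by (rule sym)
  thus ?thesis by (simp add: eq_neg_iff_add_eq_0)
qed
lemma br_jacR: "br u (br v w) = br (br u v) w - br (br u w) v"
proof -
  have "br u (br v w) + br v (br w u) + br w (br u v) = 0" by (rule br_jac)
  moreover have "br v (br w u) = br (br u w) v" using br_anti[of v "br w u"] br_anti[of w u] br_neg1 by simp
  moreover have "br w (br u v) = - br (br u v) w" by (rule br_anti)
  ultimately show ?thesis by (simp add: eq_diff_eq eq_neg_iff_add_eq_0 algebra_simps)
qed

lemma ph_add1: "\<phi> (x + y) z = \<phi> x z + \<phi> y z" using C unfolding comm_2_cocycle_def bilinear_form_def by auto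
lemma ph_add2: "\<phi> x (y + z) = \<phi> x y + \<phi> x z" using C unfolding comm_2_cocycle_def bilinear_form_def by auto
lemma ph_sym: "\<phi> x y = \<phi> y x" using C unfolding comm_2_cocycle_def by auto
lemma ph_coc: "\<phi> (br x y) z + \<phi> (br z x) y + \<phi> (br y z) x = 0" using C unfolding comm_2_cocycle_def by auto
lemma ph_01: "\<phi> 0 z = 0" by (metis add_0 add_cancel_right_right ph_add1)
lemma ph_02: "\<phi> z 0 = 0" by (metis add_0 add_cancel_right_right ph_add2)
lemma ph_neg1: "\<phi> (- x) z = - \<phi> x z"
  using ph_add1[of x "- x" z] ph_01 by (simp add: eq_neg_iff_add_eq_0 add.commute)
lemma ph_neg2: "\<phi> z (- x) = - \<phi> z x"
  using ph_add2[of z x "- x"] ph_02 by (simp add: eq_neg_iff_add_eq_0 add.commute)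
lemma ph_sub1: "\<phi> (x - y) z = \<phi> x z - \<phi> y z" by (simp only: diff_conv_add_uminus ph_add1 ph_neg1)
lemma ph_sub2: "\<phi> z (x - y) = \<phi> z x - \<phi> z y" by (simp only: diff_conv_add_uminus ph_add2 ph_neg2)

lemma Dexp: "\<phi> (br p q) s = \<phi> p (br s q) - \<phi> q (br s p)"
proof -
  have "\<phi> (br p q) s + \<phi> (br s p) q + \<phi> (br q s) p = 0" by (rule ph_coc)
  moreover have "\<phi> (br s p) q = \<phi> q (br s p)" by (rule ph_sym)
  moreover have "\<phi> (br q s) p = - \<phi> p (br s q)" using ph_sym[of "br q s" p] br_anti[of q s] ph_neg2 by simp
  ultimately show ?thesis by (simp add: algebra_simps eq_neg_iff_add_eq_0)
qed

lemmas nrm = Dexp br_jacR br_add1 br_add2 br_neg1 br_neg2 br_sub1 br_sub2 ph_add1 ph_add2 ph_neg1 ph_neg2 ph_sub1 ph_sub2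

lemma J2: "2 * (\<phi> x (br t (br y w)) + \<phi> y (br t (br w x)) + \<phi> w (br t (br x y))) = 0"
proof -
  have j: "br x (br y w) + br y (br w x) + br w (br x y) = 0" by (rule br_jac)
  have "br (br x y) w + br (br y w) x + br (br w x) y = - (br x (br y w) + br y (br w x) + br w (br x y))"
    by (simp only: br_anti[of "br x y" w] br_anti[of "br y w" x] br_anti[of "br w x" y]) (simp add: algebra_simps)
  also have "... = 0" using j by simp
  finally have "br (br x y) w + br (br y w) x + br (br w x) y = 0" .
  hence "\<phi> (br (br x y) w + br (br y w) x + br (br w x) y) t = 0" by (simp add: ph_01)
  hence "\<phi> (br (br x y) w) t + \<phi> (br (br y w) x) t + \<phi> (br (br w x) y) t = 0" by (simp add: ph_add1)
  thus ?thesis by (simp add: nrm algebra_simps)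
qed

lemma J: assumes "(2::'k) \<noteq> 0"
  shows "\<phi> x (br t (br y w)) + \<phi> y (br t (br w x)) + \<phi> w (br t (br x y)) = 0"
  using J2[of x t y w] assms by (simp only: mult_eq_0_iff) blast

lemma core: assumes "(2::'k) \<noteq> 0" "(3::'k) \<noteq> 0"
  shows "\<phi> z (br (br (br (br y a) (b)) (c)) (d)) - \<phi> z (br (br (br (br y a) (b)) (d)) (c)) - \<phi> z (br (br (br (br y a) (c)) (b)) (d)) + \<phi> z (br (br (br (br y a) (c)) (d)) (b)) + \<phi> z (br (br (br (br y a) (d)) (b)) (c)) - \<phi> z (br (br (br (br y a) (d)) (c)) (b)) - \<phi> z (br (br (br (br y b) (a)) (c)) (d)) + \<phi> z (br (br (br (br y b) (a)) (d)) (c)) + \<phi> z (br (br (br (br y b) (c)) (a)) (d)) - \<phi> z (br (br (br (br y b) (c)) (d)) (a)) - \<phi> z (br (br (br (br y b) (d)) (a)) (c)) + \<phi> z (br (br (br (br y b) (d)) (c)) (a)) + \<phi> z (br (br (br (br y c) (a)) (b)) (d)) - \<phi> z (br (br (br (br y c) (a)) (d)) (b)) - \<phi> z (br (br (br (br y c) (b)) (a)) (d)) + \<phi> z (br (br (br (br y c) (b)) (d)) (a)) + \<phi> z (br (br (br (br y c) (d)) (a)) (b)) - \<phi> z (br (br (br (br y c) (d)) (b)) (a)) - \<phi> z (br (br (br (br y d) (a)) (b)) (c)) + \<phi> z (br (br (br (br y d) (a)) (c)) (b)) + \<phi> z (br (br (br (br y d) (b)) (a)) (c)) - \<phi> z (br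 (br (br (br y d) (b)) (c)) (a)) - \<phi> z (br (br (br (br y d) (c)) (a)) (b)) + \<phi> z (br (br (br (br y d) (c)) (b)) (a)) = 0"
proof -
  have "3 * (\<phi> z (br (br (br (br y a) (b)) (c)) (d)) - \<phi> z (br (br (br (br y a) (b)) (d)) (c)) - \<phi> z (br (br (br (br y a) (c)) (b)) (d)) + \<phi> z (br (br (br (br y a) (c)) (d)) (b)) + \<phi> z (br (br (br (br y a) (d)) (b)) (c)) - \<phi> z (br (br (br (br y a) (d)) (c)) (b)) - \<phi> z (br (br (br (br y b) (a)) (c)) (d)) + \<phi> z (br (br (br (br y b) (a)) (d)) (c)) + \<phi> z (br (br (br (br y b) (c)) (a)) (d)) - \<phi> z (br (br (br (br y b) (c)) (d)) (a)) - \<phi> z (br (br (br (br y b) (d)) (a)) (c)) + \<phi> z (br (br (br (br y b) (d)) (c)) (a)) + \<phi> z (br (br (br (br y c) (a)) (b)) (d)) - \<phi> z (br (br (br (br y c) (a)) (d)) (b)) - \<phi> z (br (br (br (br y c) (b)) (a)) (d)) + \<phi> z (br (br (br (br y c) (b)) (d)) (a)) + \<phi> z (br (br (br (br y c) (d)) (a)) (b)) - \<phi> z (br (br (br (br y c) (d)) (b)) (a)) - \<phi> z (br (br (br (br y d) (a)) (b)) (c)) + \<phi> z (br (br (br (br y d) (a)) (c)) (b)) + \<phi> z (br (br (br (br y d) (b)) (a)) (c)) - \<phi> z (br (br (br (br y d) (b)) (c)) (a)) - \<phi> z (br (br (br (br y d) (c)) (a)) (b)) + \<phi> z (br (br (br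 (br y d) (c)) (b)) (a))) = (-2) * (\<phi> b (br (br (br y z) (a)) (br c d)) + \<phi> c (br (br (br y z) (a)) (br d b)) + \<phi> d (br (br (br y z) (a)) (br b c))) + (2) * (\<phi> a (br (br (br y z) (b)) (br c d)) + \<phi> c (br (br (br y z) (b)) (br d a)) + \<phi> d (br (br (br y z) (b)) (br a c))) + (1) * (\<phi> (br a c) (br (br y d) (br b z)) + \<phi> b (br (br y d) (br z (br a c))) + \<phi> z (br (br y d) (br (br a c) b))) + (-1) * (\<phi> (br a b) (br (br y d) (br c z)) + \<phi> c (br (br y d) (br z (br a b))) + \<phi> z (br (br y d) (br (br a b) c))) + (1) * (\<phi> a (br (br (br y d) (c)) (br b z)) + \<phi> b (br (br (br y d) (c)) (br z a)) + \<phi> z (br (br (br y d) (c)) (br a b))) + (1) * (\<phi> a (br (br y d) (br (br b c) z)) + \<phi> (br b c) (br (br y d) (br z a)) + \<phi> z (br (br y d) (br a (br b c)))) + (1) * (\<phi> a (br (br (br y d) (b)) (br c z)) + \<phi> c (br (br (br y d) (b)) (br z a)) + \<phi> z (br (br (br y d) (b)) (br a c))) + (-1) * (\<phi> b (br (br (br y d) (a)) (br c z)) + \<phi> c (br (br (br y d) (a)) (br z b)) + \<phi> z (br (br (br y d) (a)) (br b c))) + (1) * (\<phi> (br a b) (br (br y c) (br d z)) + \<phi> d (br (br y c) (br z (br a b))) + \<phi> z (br (br y c) (br (br a b) d))) + (-1) * (\<phi> a (br (br (br y c) (d)) (br b z)) + \<phi> b (br (br (br y c) (d)) (br z a)) +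 \<phi> z (br (br (br y c) (d)) (br a b))) + (-1) * (\<phi> a (br (br y c) (br (br b d) z)) + \<phi> (br b d) (br (br y c) (br z a)) + \<phi> z (br (br y c) (br a (br b d)))) + (-1) * (\<phi> (br a d) (br (br y c) (br b z)) + \<phi> b (br (br y c) (br z (br a d))) + \<phi> z (br (br y c) (br (br a d) b))) + (-2) * (\<phi> a (br y (br (br (br b z) (d)) c)) + \<phi> (br (br b z) (d)) (br y (br c a)) + \<phi> c (br y (br a (br (br b z) (d))))) + (-4) * (\<phi> (br (br a b) (z)) (br y (br c d)) + \<phi> c (br y (br d (br (br a b) (z)))) + \<phi> d (br y (br (br (br a b) (z)) c))) + (2) * (\<phi> a (br y (br (br (br b z) (c)) d)) + \<phi> (br (br b z) (c)) (br y (br d a)) + \<phi> d (br y (br a (br (br b z) (c))))) + (-2) * (\<phi> (br (br a z) (d)) (br y (br b c)) + \<phi> b (br y (br c (br (br a z) (d)))) + \<phi> c (br y (br (br (br a z) (d)) b))) + (2) * (\<phi> (br (br a z) (c)) (br y (br b d)) + \<phi> b (br y (br d (br (br a z) (c)))) + \<phi> d (br y (br (br (br a z) (c)) b))) + (2) * (\<phi> (br (br a d) (c)) (br y (br b z)) + \<phi> b (br y (br z (br (br a d) (c)))) + \<phi> z (br y (br (br (br a d) (c)) b))) + (2) * (\<phi> (br a d) (br (br y z) (br b c)) + \<phi> b (br (br y z) (br c (br a d))) + \<phi> c (br (br y z) (br (br a d) b))) + (-2) * (\<phi> (br a z) (br y (br (br b d) c)) + \<phi> (br b d) (br y (br c (br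 a z))) + \<phi> c (br y (br (br a z) (br b d)))) + (-2) * (\<phi> (br a d) (br y (br (br b z) c)) + \<phi> (br b z) (br y (br c (br a d))) + \<phi> c (br y (br (br a d) (br b z)))) + (2) * (\<phi> a (br (br y z) (br (br b d) c)) + \<phi> (br b d) (br (br y z) (br c a)) + \<phi> c (br (br y z) (br a (br b d)))) + (-2) * (\<phi> a (br y (br (br (br b d) (z)) c)) + \<phi> (br (br b d) (z)) (br y (br c a)) + \<phi> c (br y (br a (br (br b d) (z))))) + (2) * (\<phi> a (br (br y d) (br (br b z) c)) + \<phi> (br b z) (br (br y d) (br c a)) + \<phi> c (br (br y d) (br a (br b z)))) + (-2) * (\<phi> (br (br a d) (z)) (br y (br b c)) + \<phi> b (br y (br c (br (br a d) (z)))) + \<phi> c (br y (br (br (br a d) (z)) b))) + (2) * (\<phi> (br a z) (br (br y d) (br b c)) + \<phi> b (br (br y d) (br c (br a z))) + \<phi> c (br (br y d) (br (br a z) b))) + (2) * (\<phi> a (br y (br (br (br b d) (c)) z)) + \<phi> (br (br b d) (c)) (br y (br z a)) + \<phi> z (br y (br a (br (br b d) (c))))) + (-1) * (\<phi> a (br (br (br y c) (b)) (br d z)) + \<phi> d (br (br (br y c) (b)) (br z a)) + \<phi> z (br (br (br y c) (b)) (br a d))) + (2) * (\<phi> a (br y (br (br (br b c) (z)) d)) + \<phi> (br (br b c) (z)) (br y (br d a)) + \<phi> d (br y (br a (br (br b c) (z))))) + (2) * (\<phi> (br a b) (br (br y z) (br c d)) + \<phi> c (br (br y z) (br d (br a b)))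 + \<phi> d (br (br y z) (br (br a b) c))) + (2) * (\<phi> (br (br a c) (z)) (br y (br b d)) + \<phi> b (br y (br d (br (br a c) (z)))) + \<phi> d (br y (br (br (br a c) (z)) b))) + (-2) * (\<phi> (br a c) (br (br y z) (br b d)) + \<phi> b (br (br y z) (br d (br a c))) + \<phi> d (br (br y z) (br (br a c) b))) + (2) * (\<phi> (br a z) (br y (br (br b c) d)) + \<phi> (br b c) (br y (br d (br a z))) + \<phi> d (br y (br (br a z) (br b c)))) + (2) * (\<phi> (br a c) (br y (br (br b z) d)) + \<phi> (br b z) (br y (br d (br a c))) + \<phi> d (br y (br (br a c) (br b z)))) + (-2) * (\<phi> a (br (br y z) (br (br b c) d)) + \<phi> (br b c) (br (br y z) (br d a)) + \<phi> d (br (br y z) (br a (br b c)))) + (-2) * (\<phi> a (br (br y c) (br (br b z) d)) + \<phi> (br b z) (br (br y c) (br d a)) + \<phi> d (br (br y c) (br a (br b z)))) + (-2) * (\<phi> (br a z) (br (br y c) (br b d)) + \<phi> b (br (br y c) (br d (br a z))) + \<phi> d (br (br y c) (br (br a z) b))) + (-2) * (\<phi> a (br y (br (br (br b c) (d)) z)) + \<phi> (br (br b c) (d)) (br y (br z a)) + \<phi> z (br y (br a (br (br b c) (d))))) + (-2) * (\<phi> (br (br a c) (d)) (br y (br b z)) + \<phi> b (br y (br z (br (br a c) (d)))) + \<phi> z (br y (br (br (br a c) (d)) b))) + (2) * (\<phi> (br a b) (br y (br (br c d) z)) + \<phi> (br c d) (br y (br z (br a b))) + \<phi> z (br y (br (br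 a b) (br c d)))) + (1) * (\<phi> b (br (br (br y c) (a)) (br d z)) + \<phi> d (br (br (br y c) (a)) (br z b)) + \<phi> z (br (br (br y c) (a)) (br b d))) + (1) * (\<phi> (br a d) (br (br y b) (br c z)) + \<phi> c (br (br y b) (br z (br a d))) + \<phi> z (br (br y b) (br (br a d) c))) + (-1) * (\<phi> (br a c) (br (br y b) (br d z)) + \<phi> d (br (br y b) (br z (br a c))) + \<phi> z (br (br y b) (br (br a c) d))) + (2) * (\<phi> (br a z) (br (br y b) (br c d)) + \<phi> c (br (br y b) (br d (br a z))) + \<phi> d (br (br y b) (br (br a z) c))) + (-1) * (\<phi> a (br (br (br y b) (d)) (br c z)) + \<phi> c (br (br (br y b) (d)) (br z a)) + \<phi> z (br (br (br y b) (d)) (br a c))) + (-1) * (\<phi> a (br (br y b) (br (br c d) z)) + \<phi> (br c d) (br (br y b) (br z a)) + \<phi> z (br (br y b) (br a (br c d)))) + (-2) * (\<phi> a (br (br (br y b) (z)) (br c d)) + \<phi> c (br (br (br y b) (z)) (br d a)) + \<phi> d (br (br (br y b) (z)) (br a c))) + (1) * (\<phi> a (br (br (br y b) (c)) (br d z)) + \<phi> d (br (br (br y b) (c)) (br z a)) + \<phi> z (br (br (br y b) (c)) (br a d))) + (-1) * (\<phi> c (br (br (br y b) (a)) (br d z)) + \<phi> d (br (br (br y b) (a)) (br z c)) + \<phi> z (br (br (br y b) (a)) (br c d))) + (-1) * (\<phi> (br b d) (br (br y a) (br c z)) + \<phi> c (br (br y a) (br z (br b d))) + \<phi> z (br (br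 y a) (br (br b d) c))) + (1) * (\<phi> (br b c) (br (br y a) (br d z)) + \<phi> d (br (br y a) (br z (br b c))) + \<phi> z (br (br y a) (br (br b c) d))) + (-2) * (\<phi> (br b z) (br (br y a) (br c d)) + \<phi> c (br (br y a) (br d (br b z))) + \<phi> d (br (br y a) (br (br b z) c))) + (1) * (\<phi> b (br (br (br y a) (d)) (br c z)) + \<phi> c (br (br (br y a) (d)) (br z b)) + \<phi> z (br (br (br y a) (d)) (br b c))) + (1) * (\<phi> b (br (br y a) (br (br c d) z)) + \<phi> (br c d) (br (br y a) (br z b)) + \<phi> z (br (br y a) (br b (br c d)))) + (2) * (\<phi> b (br (br (br y a) (z)) (br c d)) + \<phi> c (br (br (br y a) (z)) (br d b)) + \<phi> d (br (br (br y a) (z)) (br b c))) + (-1) * (\<phi> b (br (br (br y a) (c)) (br d z)) + \<phi> d (br (br (br y a) (c)) (br z b)) + \<phi> z (br (br (br y a) (c)) (br b d))) + (1) * (\<phi> c (br (br (br y a) (b)) (br d z)) + \<phi> d (br (br (br y a) (b)) (br z c)) + \<phi> z (br (br (br y a) (b)) (br c d)))"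
    by (simp add: nrm algebra_simps)
  also have "... = 0" by (simp only: J[OF assms(1)] mult_zero_right add_0)
  finally have h: "3 * (\<phi> z (br (br (br (br y a) (b)) (c)) (d)) - \<phi> z (br (br (br (br y a) (b)) (d)) (c)) - \<phi> z (br (br (br (br y a) (c)) (b)) (d)) + \<phi> z (br (br (br (br y a) (c)) (d)) (b)) + \<phi> z (br (br (br (br y a) (d)) (b)) (c)) - \<phi> z (br (br (br (br y a) (d)) (c)) (b)) - \<phi> z (br (br (br (br y b) (a)) (c)) (d)) + \<phi> z (br (br (br (br y b) (a)) (d)) (c)) + \<phi> z (br (br (br (br y b) (c)) (a)) (d)) - \<phi> z (br (br (br (br y b) (c)) (d)) (a)) - \<phi> z (br (br (br (br y b) (d)) (a)) (c)) + \<phi> z (br (br (br (br y b) (d)) (c)) (a)) + \<phi> z (br (br (br (br y c) (a)) (b)) (d)) - \<phi> z (br (br (br (br y c) (a)) (d)) (b)) - \<phi> z (br (br (br (br y c) (b)) (a)) (d)) + \<phi> z (br (br (br (br y c) (b)) (d)) (a)) + \<phi> z (br (br (br (br y c) (d)) (a)) (b)) - \<phi> z (br (br (br (br y c) (d)) (b)) (a)) - \<phi> z (br (br (br (br y d) (a)) (b)) (c)) + \<phi> z (br (br (br (br y d) (a)) (c)) (b)) + \<phi> z (br (br (br (br y d) (b)) (a)) (c)) - \<phi> z (br (br (br (br y d) (b)) (c)) (a)) - \<phi> z (br (br (br (br y d) (c)) (a)) (b)) + \<phi> z (br (br (br (br y d) (c)) (b)) (a))) = 0" .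
  show ?thesis using h assms(2) by (simp only: mult_eq_0_iff) blast
qed


lemma coreE: assumes "(2::'k) \<noteq> 0" "(3::'k) \<noteq> 0"
  shows "\<phi> (E5 br y a b c d) z = 0"
proof -
  have "\<phi> (E5 br y a b c d) z = \<phi> z (E5 br y a b c d)" by (rule ph_sym)
  also have "... = 0" unfolding E5_def by (simp only: ph_add2 ph_sub2) (rule core[OF assms])
  finally show ?thesis .
qed

lemma br_der: "br a (br u v) = br (br a u) v + br u (br a v)"
proof -
  have "br u (br a v) = br (br u a) v - br (br u v) a" by (rule br_jacR)
  moreover have "br (br u a) v = - br (br a u) v" using br_anti[of u a] br_neg1 by simp
  moreover have "br (br u v) a = - br a (br u v)" by (rule br_anti)
  ultimately show ?thesis by simp
qed

lemma E5_der: "br a (E5 br y x1 x2 x3 x4) = E5 br (br a y) x1 x2 x3 x4 + E5 br y (br a x1) x2 x3 x4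
   + E5 br y x1 (br a x2) x3 x4 + E5 br y x1 x2 (br a x3) x4 + E5 br y x1 x2 x3 (br a x4)"
  unfolding E5_def by (simp add: br_der[of a] br_add1 br_add2 br_sub1 br_sub2 br_neg1 br_neg2 algebra_simps)

lemma M: "module scale" using L by (auto simp: module_def vector_space_def lie_algebra_def)

lemma std5_E: "std5 scale br y x = E5 br y (x 1) (x 2) (x 3) (x 4)"
proof -
  have S: "{1..4::nat} = insert 1 (insert 2 (insert 3 (insert 4 {})))" by auto
  have P0: "{p. p permutes ({}::nat set)} = {id}" by auto
  show ?thesis
    unfolding std5_def S
    by (simp add: sum_over_permutations_insert P0 sign_tc sign_swap_id permutation_compose permutation_swap_id
        module.scale_one[OF M] module.scale_minus_left[OF M] E5_def algebra_simps)
qed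

lemma adl_add: "adl br as (u + v) = adl br as u + adl br as v"
  by (induction as arbitrary: u v) (simp_all add: br_add2)
lemma adl_0: "adl br as 0 = 0"
  by (induction as) (simp_all add: br_02)
lemma br_scale2: "br x (scale c y) = scale c (br x y)" using L unfolding lie_algebra_def by auto
lemma adl_scale: "adl br as (scale c u) = scale c (adl br as u)"
  by (induction as arbitrary: u) (simp_all add: br_scale2)
lemma ph_scale1: "\<phi> (scale c x) y = c * \<phi> x y" using C unfolding comm_2_cocycle_def bilinear_form_def by auto

lemma std5_in: assumes "(2::'k) \<noteq> 0" "(3::'k) \<noteq> 0"
  shows "\<phi> (adl br as (std5 scale br y x)) z = 0"
proof (induction as arbitrary: y x)
  case Nil
  show ?case using coreE[OF assms] by (simp add: std5_E)
next
  case (Cons a as)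
  have "br a (std5 scale br y x) = std5 scale br (br a y) x + std5 scale br y (x(1 := br a (x 1)))
     + std5 scale br y (x(2 := br a (x 2))) + std5 scale br y (x(3 := br a (x 3))) + std5 scale br y (x(4 := br a (x 4)))"
    by (simp add: std5_E E5_der)
  thus ?case by (simp add: adl_add ph_add1 Cons.IH)
qed

end

theorem lemma2p1:
  fixes scale :: "'k::field \<Rightarrow> 'a::ab_group_add \<Rightarrow> 'a"
    and br :: "'a \<Rightarrow> 'a \<Rightarrow> 'a"
  assumes "lie_algebra scale br"
    and "CHAR('k) \<noteq> 2" and "CHAR('k) \<noteq> 3"
    and "\<exists>\<phi>. comm_2_cocycle scale br \<phi> \<and> (\<exists>x y. \<phi> x y \<noteq> 0)"
  shows "\<exists>I. lie_ideal scale br I \<and> I \<noteq> UNIV \<and> quotient_satisfies_std5 scale br I"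
proof -
  obtain \<phi> x0 y0 where C: "comm_2_cocycle scale br \<phi>" and nz: "\<phi> x0 y0 \<noteq> 0" using assms(4) by blast
  have c1: "CHAR('k) \<noteq> 1"
  proof
    assume "CHAR('k) = 1"
    hence "of_nat 1 = (0::'k)" by (simp only: of_nat_eq_0_iff_char_dvd) simp
    thus False by simp
  qed
  have two: "(2::'k) \<noteq> 0"
  proof
    assume "(2::'k) = 0"
    hence "of_nat 2 = (0::'k)" by simp
    hence d: "CHAR('k) dvd 2" by (simp only: of_nat_eq_0_iff_char_dvd)
    have n0: "CHAR('k) \<noteq> 0" using d by (metis dvd_0_left_iff zero_neq_numeral)
    have "CHAR('k) \<le> 2" using d by (simp add: dvd_imp_le)
    thus False using c1 n0 assms(2) by linarith
  qed
  have three: "(3::'k) \<noteq> 0"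
  proof
    assume "(3::'k) = 0"
    hence "of_nat 3 = (0::'k)" by simp
    hence d: "CHAR('k) dvd 3" by (simp only: of_nat_eq_0_iff_char_dvd)
    have n0: "CHAR('k) \<noteq> 0" using d by (metis dvd_0_left_iff zero_neq_numeral)
    have le: "CHAR('k) \<le> 3" using d by (simp add: dvd_imp_le)
    have "CHAR('k) \<noteq> 2"
    proof
      assume "CHAR('k) = 2"
      with d have "(2::nat) dvd 3" by simp
      thus False by simp
    qed
    thus False using c1 n0 le assms(3) by linarith
  qed
  define I where "I = {w. \<forall>as z. \<phi> (adl br as w) z = 0}"
  have "lie_ideal scale br I"
    unfolding lie_ideal_def I_def
    using adl_0[OF assms(1) C] adl_add[OF assms(1) C] adl_scale[OF assms(1) C]
      ph_01[OF assms(1) C] ph_add1[OF assms(1) C] ph_scale1[OF assms(1) C]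
    by (simp del: adl.simps(2)) (metis adl.simps(2))
  moreover have "I \<noteq> UNIV"
  proof
    assume "I = UNIV"
    hence "x0 \<in> I" by simp
    hence "\<phi> (adl br [] x0) y0 = 0" unfolding I_def by blast
    thus False using nz by simp
  qed
  moreover have "quotient_satisfies_std5 scale br I"
    unfolding quotient_satisfies_std5_def I_def using std5_in[OF assms(1) C two three] by blast
  ultimately show ?thesis by blast
qed

end
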